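(* HazardPointersPOP, as described in the context, is safe from use-after-free errors: no node freed by a reclaiming thread is subsequently accessed by any thread.
   Context: Setting: an asynchronous shared-memory system with a fixed set of threads operating on a linked concurrent data structure; each unlinked node is retired by exactly one thread. HazardPointersPOP: each thread has a private array of local reservation slots (at most MAX_HP per thread), a row of a shared single-writer multi-reader array sharedReservations, a shared monotonically increasing counter publishCounter, and a private retire list. To access a node a thread calls read(ptrAddr, slot), which repeatedly loads the pointer stored at ptrAddr, writes it into its local reservation slot (no memory fence, not published), and re-loads ptrAddr, until the two loads agree, then returns the pointer; threads only dereference nodes obtained through read and still held in a local slot. At the end of an operation local slots are set to NULL. Data structures are assumed to be used as with hazard pointers: if read returns a pointer to a node, that node was not yet retired at the time of the validating re-load. On retire a thread appends the node to its retire list; when the list reaches a threshold it (1) records all threads' publishCounter values, (2) sends a POSIX signal to every other thread, whose handler copies that thread's local reservations into its shared reservation slots and then increments its publishCounter, (3) waits until every other thread's publishCounter exceeds the recorded value, and (4) collects all shared reservations and frees every node of its retire list not among them. Assumption: after being signalled, a thread publishes its reservations (completes its handler) within bounded time. *)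

theory Defs
  imports Main
begin

text \<open>
  Abstract interleaving (sequentially consistent) model of HazardPointersPOP.
  Type parameters: 't threads (a fixed finite set), 'n nodes, 'a shared memory
  locations holding node pointers (None = NULL).
  Parameters of the model: maxhp (number of local reservation slots per thread,
  slots are 0 ..< maxhp) and thr (retire-list threshold).
\<close>

datatype ('t, 'n) phase =
    Idle
  | Recording "'t set"                    \<comment> \<open>step (1): counters still to record\<close>
  | Signalling "'t set"                   \<comment> \<open>step (2): threads still to signal\<close>
  | Waiting "'t set"                      \<comment> \<open>step (3): threads still to wait for\<close>
  | Collecting "('t \<times> nat) set" "'n set"  \<comment> \<open>step (4): shared slots still to read, collected nodes\<close>

record ('t, 'n, 'a) hpstate =
  mem      :: "'a \<Rightarrow> 'n option"              \<comment> \<open>shared pointer locations of the data structure\<close>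
  lres     :: "'t \<Rightarrow> nat \<Rightarrow> 'n option"        \<comment> \<open>private local reservation slots\<close>
  pend     :: "'t \<Rightarrow> nat \<Rightarrow> 'a option"        \<comment> \<open>read in progress on slot: address loaded from\<close>
  valid    :: "'t \<Rightarrow> nat \<Rightarrow> bool"             \<comment> \<open>slot holds a pointer returned by read\<close>
  sres     :: "'t \<Rightarrow> nat \<Rightarrow> 'n option"        \<comment> \<open>sharedReservations (row per thread)\<close>
  pcnt     :: "'t \<Rightarrow> nat"                    \<comment> \<open>publishCounter\<close>
  snap     :: "'t \<Rightarrow> 't \<Rightarrow> nat"              \<comment> \<open>counters recorded by a reclaimer\<close>
  rlist    :: "'t \<Rightarrow> 'n set"                 \<comment> \<open>private retire lists\<close>
  retired  :: "'n set"
  freed    :: "'n set"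
  phase    :: "'t \<Rightarrow> ('t, 'n) phase"
  sigpend  :: "'t \<Rightarrow> bool"
  hpos     :: "'t \<Rightarrow> nat option"             \<comment> \<open>signal handler running: next slot to copy\<close>

datatype ('t, 'n, 'a) act =
    Load 't 'a nat          \<comment> \<open>read: load ptrAddr and write it into the local slot\<close>
  | Validate 't nat         \<comment> \<open>read: validating re-load agrees, read returns\<close>
  | Access 't 'n            \<comment> \<open>dereference of a node\<close>
  | Store 't 'a "'n option" \<comment> \<open>data-structure write to shared memory\<close>
  | Retire 't 'n
  | Clear 't                \<comment> \<open>end of operation: local slots set to NULL\<close>
  | RecordPC 't 't
  | RecDone 't
  | SendSig 't 't
  | SigDone 't
  | WaitFor 't 't
  | WaitDone 't
  | CollectRes 't 't nat
  | Free 't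
  | HStart 't               \<comment> \<open>signal handler starts\<close>
  | HCopy 't                \<comment> \<open>handler copies one local slot to the shared row\<close>
  | HEnd 't                 \<comment> \<open>handler increments publishCounter\<close>

definition hp_init :: "('t, 'n, 'a) hpstate \<Rightarrow> bool" where
  "hp_init s \<longleftrightarrow>
     lres s = (\<lambda>_ _. None) \<and> pend s = (\<lambda>_ _. None) \<and> valid s = (\<lambda>_ _. False) \<and>
     sres s = (\<lambda>_ _. None) \<and> pcnt s = (\<lambda>_. 0) \<and> rlist s = (\<lambda>_. {}) \<and>
     retired s = {} \<and> freed s = {} \<and> phase s = (\<lambda>_. Idle) \<and>
     sigpend s = (\<lambda>_. False) \<and> hpos s = (\<lambda>_. None)"

text \<open>A thread executes its own (non-handler) code only when its handler is not running.\<close>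
definition running :: "('t, 'n, 'a) hpstate \<Rightarrow> 't \<Rightarrow> bool" where
  "running s t \<longleftrightarrow> hpos s t = None"

definition in_op :: "('t, 'n, 'a) hpstate \<Rightarrow> 't \<Rightarrow> bool" where
  "in_op s t \<longleftrightarrow> hpos s t = None \<and> phase s t = Idle"

inductive hp_step :: "nat \<Rightarrow> nat \<Rightarrow> ('t::finite, 'n, 'a) hpstate \<Rightarrow> ('t, 'n, 'a) act
                      \<Rightarrow> ('t, 'n, 'a) hpstate \<Rightarrow> bool"
  for maxhp :: nat and thr :: nat where
  load: "\<lbrakk> in_op s t; i < maxhp \<rbrakk> \<Longrightarrow>
     hp_step maxhp thr s (Load t a i)
       (s\<lparr> lres := (lres s)(t := (lres s t)(i := mem s a)),
           pend := (pend s)(t := (pend s t)(i := Some a)),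
           valid := (valid s)(t := (valid s t)(i := False)) \<rparr>)"
| validate: "\<lbrakk> in_op s t; i < maxhp; pend s t i = Some a; mem s a = lres s t i;
               \<comment> \<open>hazard-pointer usage assumption of the data structure\<close>
               \<forall>n. lres s t i = Some n \<longrightarrow> n \<notin> retired s \<rbrakk> \<Longrightarrow>
     hp_step maxhp thr s (Validate t i)
       (s\<lparr> pend := (pend s)(t := (pend s t)(i := None)),
           valid := (valid s)(t := (valid s t)(i := True)) \<rparr>)"
| access: "\<lbrakk> in_op s t; i < maxhp; valid s t i; lres s t i = Some n \<rbrakk> \<Longrightarrow>
     hp_step maxhp thr s (Access t n) s"
| store: "in_op s t \<Longrightarrow> hp_step maxhp thr s (Store t a v) (s\<lparr> mem := (mem s)(a := v) \<rparr>)"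
| clear: "in_op s t \<Longrightarrow>
     hp_step maxhp thr s (Clear t)
       (s\<lparr> lres := (lres s)(t := (\<lambda>_. None)), pend := (pend s)(t := (\<lambda>_. None)),
           valid := (valid s)(t := (\<lambda>_. False)) \<rparr>)"
| retire: "\<lbrakk> in_op s t; n \<notin> retired s \<rbrakk> \<Longrightarrow>
     hp_step maxhp thr s (Retire t n)
       (if card (insert n (rlist s t)) \<ge> thr then
          s\<lparr> retired := insert n (retired s), rlist := (rlist s)(t := insert n (rlist s t)),
             sres := (sres s)(t := lres s t),
             phase := (phase s)(t := Recording (UNIV - {t})) \<rparr>
        else
          s\<lparr> retired := insert n (retired s), rlist := (rlist s)(t := insert n (rlist s t)) \<rparr>)"
| record_pc: "\<lbrakk> running s t; phase s t = Recording S; u \<in> S \<rbrakk> \<Longrightarrow>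
     hp_step maxhp thr s (RecordPC t u)
       (s\<lparr> snap := (snap s)(t := (snap s t)(u := pcnt s u)),
           phase := (phase s)(t := Recording (S - {u})) \<rparr>)"
| rec_done: "\<lbrakk> running s t; phase s t = Recording {} \<rbrakk> \<Longrightarrow>
     hp_step maxhp thr s (RecDone t) (s\<lparr> phase := (phase s)(t := Signalling (UNIV - {t})) \<rparr>)"
| send_sig: "\<lbrakk> running s t; phase s t = Signalling S; u \<in> S \<rbrakk> \<Longrightarrow>
     hp_step maxhp thr s (SendSig t u)
       (s\<lparr> sigpend := (sigpend s)(u := True), phase := (phase s)(t := Signalling (S - {u})) \<rparr>)"
| sig_done: "\<lbrakk> running s t; phase s t = Signalling {} \<rbrakk> \<Longrightarrow>
     hp_step maxhp thr s (SigDone t) (s\<lparr> phase := (phase s)(t := Waiting (UNIV - {t})) \<rparr>)"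
| wait_for: "\<lbrakk> running s t; phase s t = Waiting S; u \<in> S; pcnt s u > snap s t u \<rbrakk> \<Longrightarrow>
     hp_step maxhp thr s (WaitFor t u) (s\<lparr> phase := (phase s)(t := Waiting (S - {u})) \<rparr>)"
| wait_done: "\<lbrakk> running s t; phase s t = Waiting {} \<rbrakk> \<Longrightarrow>
     hp_step maxhp thr s (WaitDone t)
       (s\<lparr> phase := (phase s)(t := Collecting {(u, i). i < maxhp} {}) \<rparr>)"
| collect: "\<lbrakk> running s t; phase s t = Collecting P Q; (u, i) \<in> P \<rbrakk> \<Longrightarrow>
     hp_step maxhp thr s (CollectRes t u i)
       (s\<lparr> phase := (phase s)(t := Collecting (P - {(u, i)}) (Q \<union> set_option (sres s u i))) \<rparr>)"
| free: "\<lbrakk> running s t; phase s t = Collecting {} Q \<rbrakk> \<Longrightarrow>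
     hp_step maxhp thr s (Free t)
       (s\<lparr> freed := freed s \<union> (rlist s t - Q), rlist := (rlist s)(t := rlist s t \<inter> Q),
           phase := (phase s)(t := Idle) \<rparr>)"
| h_start: "\<lbrakk> sigpend s t; hpos s t = None \<rbrakk> \<Longrightarrow>
     hp_step maxhp thr s (HStart t)
       (s\<lparr> sigpend := (sigpend s)(t := False), hpos := (hpos s)(t := Some 0) \<rparr>)"
| h_copy: "\<lbrakk> hpos s t = Some i; i < maxhp \<rbrakk> \<Longrightarrow>
     hp_step maxhp thr s (HCopy t)
       (s\<lparr> sres := (sres s)(t := (sres s t)(i := lres s t i)), hpos := (hpos s)(t := Some (Suc i)) \<rparr>)"
| h_end: "\<lbrakk> hpos s t = Some i; i \<ge> maxhp \<rbrakk> \<Longrightarrow>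
     hp_step maxhp thr s (HEnd t)
       (s\<lparr> pcnt := (pcnt s)(t := Suc (pcnt s t)), hpos := (hpos s)(t := None) \<rparr>)"

inductive hp_reach :: "nat \<Rightarrow> nat \<Rightarrow> ('t::finite, 'n, 'a) hpstate \<Rightarrow> bool"
  for maxhp :: nat and thr :: nat where
  init: "hp_init s \<Longrightarrow> hp_reach maxhp thr s"
| step: "\<lbrakk> hp_reach maxhp thr s; hp_step maxhp thr s e s' \<rbrakk> \<Longrightarrow> hp_reach maxhp thr s'"

end

theory Submission
  imports Defs
begin

fun snapped :: "('t, 'n) phase \<Rightarrow> 't \<Rightarrow> bool" where
  "snapped (Recording S) u = (u \<notin> S)"
| "snapped _ u = True"

definition inv :: "nat \<Rightarrow> ('t, 'n, 'a) hpstate \<Rightarrow> bool" where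
  "inv maxhp s \<longleftrightarrow>
   (\<forall>u i. valid s u i \<longrightarrow> i < maxhp) \<and>
   freed s \<subseteq> retired s \<and>
   (\<forall>r. rlist s r \<subseteq> retired s) \<and>
   (\<forall>u i n. valid s u i \<and> lres s u i = Some n \<longrightarrow> n \<notin> freed s) \<and>
   (\<forall>u i n k. valid s u i \<and> lres s u i = Some n \<and> hpos s u = Some k \<and> i < k \<longrightarrow> sres s u i = Some n) \<and>
   (\<forall>r i n. phase s r \<noteq> Idle \<and> n \<in> rlist s r \<and> valid s r i \<and> lres s r i = Some n \<longrightarrow> sres s r i = Some n) \<and>
   (\<forall>r u i n. phase s r \<noteq> Idle \<and> u \<noteq> r \<and> n \<in> rlist s r \<and> valid s u i \<and> lres s u i = Some n \<and>
        snapped (phase s r) u \<and> snap s r u < pcnt s u \<longrightarrow> sres s u i = Some n) \<and>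
   (\<forall>r S u. phase s r = Waiting S \<and> u \<noteq> r \<and> u \<notin> S \<longrightarrow> snap s r u < pcnt s u) \<and>
   (\<forall>r P Q u. phase s r = Collecting P Q \<and> u \<noteq> r \<longrightarrow> snap s r u < pcnt s u) \<and>
   (\<forall>r P Q u i n. phase s r = Collecting P Q \<and> n \<in> rlist s r \<and> valid s u i \<and> lres s u i = Some n \<and> (u, i) \<notin> P \<longrightarrow> n \<in> Q)"

lemma inv_init: "hp_init s \<Longrightarrow> inv maxhp s"
  by (simp add: hp_init_def inv_def)

lemma invB: "inv maxhp s \<Longrightarrow> valid s u i \<Longrightarrow> i < maxhp"
  by (simp add: inv_def)
lemma invFR: "inv maxhp s \<Longrightarrow> n \<in> freed s \<Longrightarrow> n \<in> retired s"
  by (auto simp add: inv_def)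
lemma invRL: "inv maxhp s \<Longrightarrow> n \<in> rlist s r \<Longrightarrow> n \<in> retired s"
  by (auto simp add: inv_def)
lemma invM: "inv maxhp s \<Longrightarrow> valid s u i \<Longrightarrow> lres s u i = Some n \<Longrightarrow> n \<notin> freed s"
  by (auto simp add: inv_def)
lemma invG: "inv maxhp s \<Longrightarrow> valid s u i \<Longrightarrow> lres s u i = Some n \<Longrightarrow> hpos s u = Some k \<Longrightarrow> i < k \<Longrightarrow> sres s u i = Some n"
  by (simp add: inv_def)
lemma invK: "inv maxhp s \<Longrightarrow> phase s r \<noteq> Idle \<Longrightarrow> n \<in> rlist s r \<Longrightarrow> valid s r i \<Longrightarrow> lres s r i = Some n \<Longrightarrow> sres s r i = Some n"
  by (simp add: inv_def)
lemma invJ: "inv maxhp s \<Longrightarrow> phase s r \<noteq> Idle \<Longrightarrow> u \<noteq> r \<Longrightarrow> n \<in> rlist s r \<Longrightarrow> valid s u i \<Longrightarrow> lres s u i = Some n \<Longrightarrow> snapped (phase s r) u \<Longrightarrow> snap s r u < pcnt s u \<Longrightarrow> sres s u i = Some n"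
  by (simp add: inv_def)
lemma invG2: "inv maxhp s \<Longrightarrow> valid s u i \<Longrightarrow> lres s u i = Some n \<Longrightarrow> hpos s u \<noteq> None \<Longrightarrow> (\<forall>k. hpos s u = Some k \<longrightarrow> maxhp \<le> k) \<Longrightarrow> sres s u i = Some n"
proof -
  assume a: "inv maxhp s" "valid s u i" "lres s u i = Some n" "hpos s u \<noteq> None" "\<forall>k. hpos s u = Some k \<longrightarrow> maxhp \<le> k"
  then obtain k where k: "hpos s u = Some k" by auto
  have "i < maxhp" using invB[OF a(1,2)] .
  with a(5) k have "i < k" by auto
  then show ?thesis using invG[OF a(1,2,3) k] by simp
qed
lemma invW: "inv maxhp s \<Longrightarrow> phase s r = Waiting S \<Longrightarrow> u \<noteq> r \<Longrightarrow> u \<notin> S \<Longrightarrow> snap s r u < pcnt s u"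
  by (simp add: inv_def)
lemma invC: "inv maxhp s \<Longrightarrow> phase s r = Collecting P Q \<Longrightarrow> u \<noteq> r \<Longrightarrow> snap s r u < pcnt s u"
  by (simp add: inv_def)
lemma invW2: "inv maxhp s \<Longrightarrow> phase s r = Waiting S \<Longrightarrow> u \<noteq> r \<Longrightarrow> u \<notin> S \<Longrightarrow> snap s r u < Suc (pcnt s u)"
  by (simp add: inv_def less_SucI)
lemma invC2: "inv maxhp s \<Longrightarrow> phase s r = Collecting P Q \<Longrightarrow> u \<noteq> r \<Longrightarrow> snap s r u < Suc (pcnt s u)"
  by (simp add: inv_def less_SucI)
lemma invS: "inv maxhp s \<Longrightarrow> phase s r = Collecting P Q \<Longrightarrow> n \<in> rlist s r \<Longrightarrow> valid s u i \<Longrightarrow> lres s u i = Some n \<Longrightarrow> sres s u i \<noteq> Some n \<Longrightarrow> R"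
proof -
  assume a: "inv maxhp s" "phase s r = Collecting P Q" "n \<in> rlist s r" "valid s u i" "lres s u i = Some n" "sres s u i \<noteq> Some n"
  show R
  proof (cases "u = r")
    case True
    then show ?thesis using invK[OF a(1) _ a(3), of i] a by simp
  next
    case False
    then show ?thesis using invJ[OF a(1) _ False a(3) a(4) a(5)] invC[OF a(1) a(2) False] a by simp
  qed
qed
lemma invQ: "inv maxhp s \<Longrightarrow> phase s r = Collecting P Q \<Longrightarrow> n \<in> rlist s r \<Longrightarrow> valid s u i \<Longrightarrow> lres s u i = Some n \<Longrightarrow> (u, i) \<notin> P \<Longrightarrow> n \<in> Q"
  by (simp add: inv_def)

lemma inv_load:
  assumes "hp_step maxhp thr s (Load t a i) s'" and I: "inv maxhp s"
  shows "inv maxhp s'"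
  using assms(1)
  by (cases rule: hp_step.cases; unfold inv_def; intro conjI; auto simp: in_op_def intro: invB[OF I] invFR[OF I] invRL[OF I] invG[OF I] invK[OF I] invJ[OF I] invW[OF I] invC[OF I] invQ[OF I] invJ[OF I, where r=t] invQ[OF I, where r=t] invG2[OF I] invW2[OF I] invC2[OF I] dest: invM[OF I])

lemma inv_validate:
  assumes "hp_step maxhp thr s (Validate t i) s'" and I: "inv maxhp s"
  shows "inv maxhp s'"
  using assms(1)
  by (cases rule: hp_step.cases; unfold inv_def; intro conjI; auto simp: in_op_def intro: invB[OF I] invFR[OF I] invRL[OF I] invG[OF I] invK[OF I] invJ[OF I] invW[OF I] invC[OF I] invQ[OF I] invJ[OF I, where r=t] invQ[OF I, where r=t] invG2[OF I] invW2[OF I] invC2[OF I] dest: invM[OF I])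

lemma inv_store:
  assumes "hp_step maxhp thr s (Store t a v) s'" and I: "inv maxhp s"
  shows "inv maxhp s'"
  using assms(1)
  by (cases rule: hp_step.cases; unfold inv_def; intro conjI; auto simp: in_op_def intro: invB[OF I] invFR[OF I] invRL[OF I] invG[OF I] invK[OF I] invJ[OF I] invW[OF I] invC[OF I] invQ[OF I] invJ[OF I, where r=t] invQ[OF I, where r=t] invG2[OF I] invW2[OF I] invC2[OF I] dest: invM[OF I])

lemma inv_clear:
  assumes "hp_step maxhp thr s (Clear t) s'" and I: "inv maxhp s"
  shows "inv maxhp s'"
  using assms(1)
  by (cases rule: hp_step.cases; unfold inv_def; intro conjI; auto simp: in_op_def intro: invB[OF I] invFR[OF I] invRL[OF I] invG[OF I] invK[OF I] invJ[OF I] invW[OF I] invC[OF I] invQ[OF I] invJ[OF I, where r=t] invQ[OF I, where r=t] invG2[OF I] invW2[OF I] invC2[OF I] dest: invM[OF I])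

lemma inv_retire:
  assumes "hp_step maxhp thr s (Retire t n) s'" and I: "inv maxhp s"
  shows "inv maxhp s'"
  using assms(1)
  by (cases rule: hp_step.cases; unfold inv_def; intro conjI; auto simp: in_op_def intro: invB[OF I] invFR[OF I] invRL[OF I] invG[OF I] invK[OF I] invJ[OF I] invW[OF I] invC[OF I] invQ[OF I] invJ[OF I, where r=t] invQ[OF I, where r=t] invG2[OF I] invW2[OF I] invC2[OF I] dest: invM[OF I])

lemma inv_record_pc:
  assumes "hp_step maxhp thr s (RecordPC t u) s'" and I: "inv maxhp s"
  shows "inv maxhp s'"
  using assms(1)
  by (cases rule: hp_step.cases; unfold inv_def; intro conjI; auto simp: running_def intro: invB[OF I] invFR[OF I] invRL[OF I] invG[OF I] invK[OF I] invJ[OF I] invW[OF I] invC[OF I] invQ[OF I] invJ[OF I, where r=t] invQ[OF I, where r=t] invG2[OF I] invW2[OF I] invC2[OF I] dest: invM[OF I])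

lemma inv_rec_done:
  assumes "hp_step maxhp thr s (RecDone t) s'" and I: "inv maxhp s"
  shows "inv maxhp s'"
  using assms(1)
  by (cases rule: hp_step.cases; unfold inv_def; intro conjI; auto simp: running_def intro: invB[OF I] invFR[OF I] invRL[OF I] invG[OF I] invK[OF I] invJ[OF I] invW[OF I] invC[OF I] invQ[OF I] invJ[OF I, where r=t] invQ[OF I, where r=t] invG2[OF I] invW2[OF I] invC2[OF I] dest: invM[OF I])

lemma inv_send_sig:
  assumes "hp_step maxhp thr s (SendSig t u) s'" and I: "inv maxhp s"
  shows "inv maxhp s'"
  using assms(1)
  by (cases rule: hp_step.cases; unfold inv_def; intro conjI; auto simp: running_def intro: invB[OF I] invFR[OF I] invRL[OF I] invG[OF I] invK[OF I] invJ[OF I] invW[OF I] invC[OF I] invQ[OF I] invJ[OF I, where r=t] invQ[OF I, where r=t] invG2[OF I] invW2[OF I] invC2[OF I] dest: invM[OF I])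

lemma inv_sig_done:
  assumes "hp_step maxhp thr s (SigDone t) s'" and I: "inv maxhp s"
  shows "inv maxhp s'"
  using assms(1)
  by (cases rule: hp_step.cases; unfold inv_def; intro conjI; auto simp: running_def intro: invB[OF I] invFR[OF I] invRL[OF I] invG[OF I] invK[OF I] invJ[OF I] invW[OF I] invC[OF I] invQ[OF I] invJ[OF I, where r=t] invQ[OF I, where r=t] invG2[OF I] invW2[OF I] invC2[OF I] dest: invM[OF I])

lemma inv_wait_for:
  assumes "hp_step maxhp thr s (WaitFor t u) s'" and I: "inv maxhp s"
  shows "inv maxhp s'"
  using assms(1)
  by (cases rule: hp_step.cases; unfold inv_def; intro conjI; auto simp: running_def intro: invB[OF I] invFR[OF I] invRL[OF I] invG[OF I] invK[OF I] invJ[OF I] invW[OF I] invC[OF I] invQ[OF I] invJ[OF I, where r=t] invQ[OF I, where r=t] invG2[OF I] invW2[OF I] invC2[OF I] dest: invM[OF I])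

lemma inv_wait_done:
  assumes "hp_step maxhp thr s (WaitDone t) s'" and I: "inv maxhp s"
  shows "inv maxhp s'"
  using assms(1)
  by (cases rule: hp_step.cases; unfold inv_def; intro conjI; auto simp: running_def intro: invB[OF I] invFR[OF I] invRL[OF I] invG[OF I] invK[OF I] invJ[OF I] invW[OF I] invC[OF I] invQ[OF I] invJ[OF I, where r=t] invQ[OF I, where r=t] invG2[OF I] invW2[OF I] invC2[OF I] dest: invM[OF I])

lemma inv_collect:
  assumes "hp_step maxhp thr s (CollectRes t u i) s'" and I: "inv maxhp s"
  shows "inv maxhp s'"
  using assms(1)
  by (cases rule: hp_step.cases; unfold inv_def; intro conjI; auto simp: running_def intro: invB[OF I] invFR[OF I] invRL[OF I] invG[OF I] invK[OF I] invJ[OF I] invW[OF I] invC[OF I] invQ[OF I] invJ[OF I, where r=t] invQ[OF I, where r=t] invG2[OF I] invS[OF I, where r=t] invW2[OF I] invC2[OF I] dest: invM[OF I])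

lemma inv_free:
  assumes "hp_step maxhp thr s (Free t) s'" and I: "inv maxhp s"
  shows "inv maxhp s'"
  using assms(1)
  by (cases rule: hp_step.cases; unfold inv_def; intro conjI; auto simp: running_def intro: invB[OF I] invFR[OF I] invRL[OF I] invG[OF I] invK[OF I] invJ[OF I] invW[OF I] invC[OF I] invQ[OF I] invJ[OF I, where r=t] invQ[OF I, where r=t] invG2[OF I] invW2[OF I] invC2[OF I] dest: invM[OF I])

lemma inv_h_start:
  assumes "hp_step maxhp thr s (HStart t) s'" and I: "inv maxhp s"
  shows "inv maxhp s'"
  using assms(1)
  by (cases rule: hp_step.cases; unfold inv_def; intro conjI; auto simp: running_def intro: invB[OF I] invFR[OF I] invRL[OF I] invG[OF I] invK[OF I] invJ[OF I] invW[OF I] invC[OF I] invQ[OF I] invJ[OF I, where r=t] invQ[OF I, where r=t] invG2[OF I] invW2[OF I] invC2[OF I] dest: invM[OF I])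

lemma inv_h_copy:
  assumes "hp_step maxhp thr s (HCopy t) s'" and I: "inv maxhp s"
  shows "inv maxhp s'"
  using assms(1)
  by (cases rule: hp_step.cases; unfold inv_def; intro conjI; auto simp: running_def intro: invB[OF I] invFR[OF I] invRL[OF I] invG[OF I] invK[OF I] invJ[OF I] invW[OF I] invC[OF I] invQ[OF I] invJ[OF I, where r=t] invQ[OF I, where r=t] invG2[OF I] invW2[OF I] invC2[OF I] dest: invM[OF I])

lemma inv_h_end:
  assumes "hp_step maxhp thr s (HEnd t) s'" and I: "inv maxhp s"
  shows "inv maxhp s'"
  using assms(1)
  by (cases rule: hp_step.cases; unfold inv_def; intro conjI; auto simp: running_def intro: invB[OF I] invFR[OF I] invRL[OF I] invG[OF I] invK[OF I] invJ[OF I] invW[OF I] invC[OF I] invQ[OF I] invJ[OF I, where r=t] invQ[OF I, where r=t] invG2[OF I] invW2[OF I] invC2[OF I] dest: invM[OF I])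

lemma inv_step:
  assumes I: "inv maxhp s" and st: "hp_step maxhp thr s e s'"
  shows "inv maxhp s'"
proof (cases e)
  case (Access t n)
  show ?thesis using st I unfolding Access by (cases rule: hp_step.cases) auto
next
  case (Load t a i)
  show ?thesis using st unfolding Load by (rule inv_load[OF _ I])
next
  case (Validate t i)
  show ?thesis using st unfolding Validate by (rule inv_validate[OF _ I])
next
  case (Store t a v)
  show ?thesis using st unfolding Store by (rule inv_store[OF _ I])
next
  case (Clear t)
  show ?thesis using st unfolding Clear by (rule inv_clear[OF _ I])
next
  case (Retire t n)
  show ?thesis using st unfolding Retire by (rule inv_retire[OF _ I])
next
  case (RecordPC t u)
  show ?thesis using st unfolding RecordPC by (rule inv_record_pc[OF _ I])
next
  case (RecDone t)
  show ?thesis using st unfolding RecDone by (rule inv_rec_done[OF _ I])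
next
  case (SendSig t u)
  show ?thesis using st unfolding SendSig by (rule inv_send_sig[OF _ I])
next
  case (SigDone t)
  show ?thesis using st unfolding SigDone by (rule inv_sig_done[OF _ I])
next
  case (WaitFor t u)
  show ?thesis using st unfolding WaitFor by (rule inv_wait_for[OF _ I])
next
  case (WaitDone t)
  show ?thesis using st unfolding WaitDone by (rule inv_wait_done[OF _ I])
next
  case (CollectRes t u i)
  show ?thesis using st unfolding CollectRes by (rule inv_collect[OF _ I])
next
  case (Free t)
  show ?thesis using st unfolding Free by (rule inv_free[OF _ I])
next
  case (HStart t)
  show ?thesis using st unfolding HStart by (rule inv_h_start[OF _ I])
next
  case (HCopy t)
  show ?thesis using st unfolding HCopy by (rule inv_h_copy[OF _ I])
next
  case (HEnd t)
  show ?thesis using st unfolding HEnd by (rule inv_h_end[OF _ I])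
qed

lemma inv_reach: "hp_reach maxhp thr s \<Longrightarrow> inv maxhp s"
  by (induction rule: hp_reach.induct) (auto intro: inv_init inv_step)

theorem mainTheorem7:
  fixes maxhp thr :: nat
    and s s' :: "('t::finite, 'n, 'a) hpstate"
  assumes "hp_reach maxhp thr s"
    and "hp_step maxhp thr s (Access t n) s'"
  shows "n \<notin> freed s"
proof -
  have I: "inv maxhp s" using assms(1) by (rule inv_reach)
  from assms(2) obtain i where "valid s t i" "lres s t i = Some n"
    by (cases rule: hp_step.cases) auto
  with I show ?thesis by (auto simp: inv_def)
qed

end
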